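(* Let $\ell,\tilde\ell\in\mathcal{D}^-[0,\infty)$ and $r,\tilde r\in\mathcal{D}^+[0,\infty)$ with $\tilde\ell\le\ell$, $r\le\tilde r$ and $\inf_{t\ge0}(r(t)-\ell(t))>0$. Given $\psi\in\mathcal{D}[0,\infty)$, let $(\eta_\ell,\eta_r)$ and $(\eta_{\tilde\ell},\eta_{\tilde r})$ be the constraining processes associated with the SP for $\psi$ on $[\ell(\cdot),r(\cdot)]$ and on $[\tilde\ell(\cdot),\tilde r(\cdot)]$, respectively. Then for every $t\ge0$, $\eta_r(t)\ge\eta_{\tilde r}(t)$ and $\eta_\ell(t)\ge\eta_{\tilde\ell}(t)$.
   Context: $\mathcal{D}[0,\infty)$ denotes the càdlàg functions $[0,\infty)\to(-\infty,\infty)$; $\mathcal{D}^-[0,\infty)$ (resp. $\mathcal{D}^+[0,\infty)$) denotes càdlàg functions with values in $[-\infty,\infty)$ (resp. $(-\infty,\infty]$). SP: $(\phi,\eta)\in\mathcal{D}[0,\infty)^2$ solves the SP on $[\ell(\cdot),r(\cdot)]$ for $\psi$ if (1) $\phi(t)=\psi(t)+\eta(t)\in[\ell(t),r(t)]$ for all $t\ge0$; (2) $\eta=\eta_\ell-\eta_r$ with $\eta_\ell,\eta_r$ non-decreasing and $\int_0^\infty \mathbb{I}_{\{\phi(s)>\ell(s)\}}\,d\eta_\ell(s)=0$, $\int_0^\infty \mathbb{I}_{\{\phi(s)<r(s)\}}\,d\eta_r(s)=0$. The pair $(\eta_\ell,\eta_r)$ is called the pair of constraining processes associated with the SP. When $\inf_t(r(t)-\ell(t))>0$,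 the SP has a unique solution for every $\psi\in\mathcal{D}[0,\infty)$. *)

theory Defs
  imports "HOL-Analysis.Analysis"
begin

definition cadlag :: "(real \<Rightarrow> 'a::topological_space) \<Rightarrow> bool" where
  "cadlag f \<longleftrightarrow> (\<forall>t\<ge>0. continuous (at_right t) f \<and>
                        (t > 0 \<longrightarrow> (\<exists>L. (f \<longlongrightarrow> L) (at_left t))))"

definition Dspace :: "(real \<Rightarrow> real) set" where
  "Dspace = {f. cadlag f}"

definition Dminus :: "(real \<Rightarrow> ereal) set" where
  "Dminus = {f. cadlag f \<and> (\<forall>t\<ge>0. f t \<noteq> \<infinity>)}"

definition Dplus :: "(real \<Rightarrow> ereal) set" where
  "Dplus = {f. cadlag f \<and> (\<forall>t\<ge>0. f t \<noteq> -\<infinity>)}"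

text \<open>Lebesgue-Stieltjes measure d g on [0,oo) of a non-decreasing cadlag g,
  with the convention g(0-) = 0 (so the jump g(0) at time 0 is an atom).\<close>
definition LS_measure :: "(real \<Rightarrow> real) \<Rightarrow> real measure" where
  "LS_measure g = interval_measure (\<lambda>x. if x < 0 then 0 else g x)"

definition nondecr_from0 :: "(real \<Rightarrow> real) \<Rightarrow> bool" where
  "nondecr_from0 g \<longleftrightarrow> 0 \<le> g 0 \<and> (\<forall>s t. 0 \<le> s \<longrightarrow> s \<le> t \<longrightarrow> g s \<le> g t)"

definition solves_SP ::
  "(real \<Rightarrow> ereal) \<Rightarrow> (real \<Rightarrow> ereal) \<Rightarrow> (real \<Rightarrow> real) \<Rightarrow> (real \<Rightarrow> real) \<Rightarrow> (real \<Rightarrow> real) \<Rightarrow> bool"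
  where
  "solves_SP l r psi phi eta \<longleftrightarrow> phi \<in> Dspace \<and> eta \<in> Dspace \<and>
     (\<forall>t\<ge>0. phi t = psi t + eta t \<and> l t \<le> ereal (phi t) \<and> ereal (phi t) \<le> r t)"

text \<open>(eta_l, eta_r) is the pair of constraining processes associated with the SP
  on [l(.), r(.)] for psi: there is a solution (phi, eta) of the SP with
  eta = eta_l - eta_r, eta_l, eta_r non-decreasing cadlag (with eta_l(0-) = eta_r(0-) = 0),
  d eta_l carried by {phi = l} and d eta_r carried by {phi = r} on [0,oo).\<close>
definition constraining_pair ::
  "(real \<Rightarrow> ereal) \<Rightarrow> (real \<Rightarrow> ereal) \<Rightarrow> (real \<Rightarrow> real) \<Rightarrow> (real \<Rightarrow> real) \<Rightarrow> (real \<Rightarrow> real) \<Rightarrow> bool"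
  where
  "constraining_pair l r psi eta_l eta_r \<longleftrightarrow>
     (\<exists>phi eta. solves_SP l r psi phi eta \<and>
        eta_l \<in> Dspace \<and> eta_r \<in> Dspace \<and>
        nondecr_from0 eta_l \<and> nondecr_from0 eta_r \<and>
        (\<forall>t\<ge>0. eta t = eta_l t - eta_r t) \<and>
        (AE s in LS_measure eta_l. 0 \<le> s \<longrightarrow> \<not> (ereal (phi s) > l s)) \<and>
        (AE s in LS_measure eta_r. 0 \<le> s \<longrightarrow> \<not> (ereal (phi s) < r s)))"

end

theory Submission imports Defs "HOL-Analysis.Analysis" begin
lemma AE_pos_ex:
  assumes "AE x in M. P x" "A \<in> sets M" "emeasure M A > 0"
  shows "\<exists>x\<in>A. P x"
proof (rule ccontr)
  assume nex: "\<not> ?thesis"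
  from assms(1) obtain N where N: "{x\<in>space M. \<not> P x} \<subseteq> N" "N \<in> sets M" "emeasure M N = 0"
    by (auto elim: AE_E)
  have "A \<subseteq> N" using N(1) nex sets.sets_into_space[OF assms(2)] by auto
  then have "emeasure M A \<le> emeasure M N" using N(2) by (rule emeasure_mono)
  with N(3) assms(3) show False by simp
qed

lemma core:
  fixes G H :: "real \<Rightarrow> real"
  assumes mG: "mono G" and mH: "mono H" and rc: "\<And>a. continuous (at_right a) G"
    and AEP: "AE x in interval_measure G. P x"
    and au: "a < u" and Da: "G a - H a \<le> 0" and Du: "G u - H u > 0"
  shows "\<exists>x. a < x \<and> x \<le> u \<and> P x \<and> G x - H x > 0"
proof -
  define D where "D x = G x - H x" for x
  define T where "T = {w. a \<le> w \<and> w \<le> u \<and> D w \<le> 0}"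
  define w0 where "w0 = Sup T"
  have aT: "a \<in> T" using au Da by (auto simp: T_def D_def)
  have bdd: "bdd_above T" unfolding T_def by (rule bdd_aboveI[of _ u]) auto
  have aw0: "a \<le> w0" unfolding w0_def by (rule cSup_upper[OF aT bdd])
  have w0u: "w0 \<le> u" unfolding w0_def using aT by (intro cSup_least) (auto simp: T_def)
  have emI: "emeasure (interval_measure G) {x<..y} = G y - G x" if "x \<le> y" for x y
    using that mG rc by (intro emeasure_interval_measure_Ioc) (auto simp: mono_def)
  show ?thesis
  proof (cases "D w0 \<le> 0")
    case True
    then have "w0 \<noteq> u" using Du by (auto simp: D_def)
    with w0u have wu: "w0 < u" by simp
    have "H w0 \<le> H u" using mH wu by (auto simp: mono_def)
    then have "G u - G w0 > 0" using True Du by (auto simp: D_def)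
    then have "emeasure (interval_measure G) {w0<..u} > 0" using emI[of w0 u] wu by simp
    then obtain x where x: "x \<in> {w0<..u}" "P x" using AE_pos_ex[OF AEP, of "{w0<..u}"] by auto
    have "x \<notin> T"
    proof
      assume "x \<in> T" then have "x \<le> w0" unfolding w0_def by (rule cSup_upper[OF _ bdd])
      with x show False by simp
    qed
    then have "D x > 0" using x aw0 by (auto simp: T_def)
    then show ?thesis using x aw0 by (intro exI[of _ x]) (auto simp: D_def)
  next
    case False
    then have Dw0: "D w0 > 0" by simp
    define A where "A n = {w0 - 1 / real (Suc n) <.. w0}" for n
    have lb: "ennreal (D w0) \<le> emeasure (interval_measure G) (A n)" for n
    proof -
      have "w0 - 1 / real (Suc n) < Sup T" unfolding w0_def[symmetric] by simp
      then obtain w where w: "w \<in> T" "w0 - 1 / real (Suc n) < w"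
        using less_cSup_iff[OF _ bdd] aT by blast
      have "w \<le> w0" unfolding w0_def by (rule cSup_upper[OF w(1) bdd])
      have "G (w0 - 1 / real (Suc n)) \<le> G w" using mG w(2) by (auto simp: mono_def)
      moreover have "H w \<le> H w0" using mH \<open>w \<le> w0\<close> by (auto simp: mono_def)
      moreover have "D w \<le> 0" using w(1) by (auto simp: T_def)
      ultimately have "D w0 \<le> G w0 - G (w0 - 1 / real (Suc n))" by (auto simp: D_def)
      moreover have "emeasure (interval_measure G) (A n) = G w0 - G (w0 - 1 / real (Suc n))"
        unfolding A_def by (rule emI) simp
      ultimately show ?thesis by (simp add: ennreal_leI)
    qed
    have decA: "decseq A"
      unfolding decseq_def A_def
    proof (intro allI impI subsetI)
      fix m n x assume "m \<le> n" "x \<in> {w0 - 1 / real (Suc n)<..w0}"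
      moreover have "1 / real (Suc n) \<le> 1 / real (Suc m)" using \<open>m \<le> n\<close>
        by (intro divide_left_mono) auto
      ultimately show "x \<in> {w0 - 1 / real (Suc m)<..w0}"
        unfolding greaterThanAtMost_iff by (meson diff_left_mono le_less_trans)
    qed
    have finA: "emeasure (interval_measure G) (A n) \<noteq> \<infinity>" for n
      unfolding A_def by (subst emI) auto
    have IA: "(\<Inter>i. A i) = {w0}"
    proof (intro equalityI subsetI)
      fix x assume x: "x \<in> (\<Inter>i. A i)"
      then have "x \<le> w0" by (auto simp: A_def)
      moreover have "\<not> x < w0"
      proof
        assume "x < w0"
        then obtain n where "inverse (real (Suc n)) < w0 - x"
          using reals_Archimedean[of "w0 - x"] by auto
        moreover have "x \<in> A n" using x by auto
        ultimately show False by (auto simp: A_def field_simps)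
      qed
      ultimately show "x \<in> {w0}" by auto
    qed (auto simp: A_def)
    have "(INF n. emeasure (interval_measure G) (A n)) = emeasure (interval_measure G) (\<Inter>i. A i)"
      by (rule INF_emeasure_decseq) (use decA finA in \<open>auto simp: A_def[abs_def]\<close>)
    moreover have "ennreal (D w0) \<le> (INF n. emeasure (interval_measure G) (A n))"
      by (rule INF_greatest) (use lb in auto)
    ultimately have "emeasure (interval_measure G) {w0} > 0" using Dw0 IA
      by (metis ennreal_eq_0_iff less_le_not_le not_gr_zero order.strict_trans1 order_le_less)
    then obtain x where "x \<in> {w0}" "P x" using AE_pos_ex[OF AEP, of "{w0}"] by auto
    moreover have "w0 \<noteq> a" using Dw0 Da by (auto simp: D_def)
    ultimately show ?thesis using aw0 w0u Dw0 by (intro exI[of _ w0]) (auto simp: D_def)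
  qed
qed

lemma ext_mono:
  assumes "nondecr_from0 g"
  shows "mono (\<lambda>x. if x < 0 then 0 else g x)"
  using assms unfolding nondecr_from0_def mono_def
  by (auto, meson linorder_not_less order_trans order_refl)

lemma ext_rc:
  assumes "g \<in> Dspace"
  shows "continuous (at_right a) (\<lambda>x::real. if x < 0 then 0 else g x)"
proof (cases "a < 0")
  case True
  have ev: "eventually (\<lambda>y. (if y < 0 then 0 else g y) = 0) (at_right a)"
    using eventually_at_right_real[OF True] by eventually_elim auto
  show ?thesis unfolding continuous_within using True
    by (simp add: tendsto_cong[OF ev])
next
  case False
  then have c: "continuous (at_right a) g" using assms by (auto simp: Dspace_def cadlag_def)
  have ev: "eventually (\<lambda>y. (if y < 0 then 0 else g y) = g y) (at_right a)"
    using eventually_at_right_less[of a] by eventually_elim (use False in auto)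
  show ?thesis using c False unfolding continuous_within
    by (simp add: tendsto_cong[OF ev])
qed

lemma rc_less:
  fixes f g :: "real \<Rightarrow> ereal"
  assumes "continuous (at_right s) f" "continuous (at_right s) g" "f s < g s"
  shows "\<exists>b>s. \<forall>x. s \<le> x \<longrightarrow> x < b \<longrightarrow> f x < g x"
proof -
  obtain m where m: "f s < ereal m" "ereal m < g s" using ereal_dense2[OF assms(3)] by auto
  have "eventually (\<lambda>x. f x < ereal m) (at_right s)"
    using assms(1) m(1) unfolding continuous_within by (rule order_tendstoD(2))
  moreover have "eventually (\<lambda>x. ereal m < g x) (at_right s)"
    using assms(2) m(2) unfolding continuous_within by (rule order_tendstoD(1))
  ultimately have "eventually (\<lambda>x. f x < g x) (at_right s)"
    by eventually_elim auto
  then obtain b where b: "b > s" "\<And>y. y > s \<Longrightarrow> y < b \<Longrightarrow> f y < g y"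
    unfolding eventually_at_right_field by auto
  show ?thesis
  proof (intro exI[of _ b] conjI allI impI)
    fix x assume "s \<le> x" "x < b"
    then show "f x < g x" using b assms(3) by (cases "x = s") auto
  qed (use b in auto)
qed

lemma rc_ereal:
  assumes "f \<in> Dspace" "s \<ge> 0"
  shows "continuous (at_right s) (\<lambda>x. ereal (f x))"
  using assms unfolding Dspace_def cadlag_def continuous_within
  by (auto intro: tendsto_ereal)

lemma rc_D:
  assumes "f \<in> Dminus \<or> f \<in> Dplus" "s \<ge> 0"
  shows "continuous (at_right s) f"
  using assms unfolding Dminus_def Dplus_def cadlag_def by auto

theorem proposition3p3:
  fixes l lt r rt :: "real \<Rightarrow> ereal" and psi eta_l eta_r eta_lt eta_rt :: "real \<Rightarrow> real"
  assumes "l \<in> Dminus" and "lt \<in> Dminus" and "r \<in> Dplus" and "rt \<in> Dplus"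
    and "\<forall>t\<ge>0. lt t \<le> l t" and "\<forall>t\<ge>0. r t \<le> rt t"
    and "\<exists>\<delta>>0. \<forall>t\<ge>0. l t + ereal \<delta> \<le> r t"
    and "psi \<in> Dspace"
    and "constraining_pair l r psi eta_l eta_r"
    and "constraining_pair lt rt psi eta_lt eta_rt"
  shows "\<forall>t\<ge>0. eta_r t \<ge> eta_rt t \<and> eta_l t \<ge> eta_lt t"
proof -
  obtain \<delta> where dpos: "\<delta> > 0" and dgap: "\<forall>t\<ge>0. l t + ereal \<delta> \<le> r t" using assms(7) by auto
  obtain phi eta where SP: "solves_SP l r psi phi eta" and el: "eta_l \<in> Dspace" and er: "eta_r \<in> Dspace"
    and ndl: "nondecr_from0 eta_l" and ndr: "nondecr_from0 eta_r"
    and eeq: "\<forall>t\<ge>0. eta t = eta_l t - eta_r t"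
    and AEl: "AE s in LS_measure eta_l. 0 \<le> s \<longrightarrow> \<not> (ereal (phi s) > l s)"
    and AEr: "AE s in LS_measure eta_r. 0 \<le> s \<longrightarrow> \<not> (ereal (phi s) < r s)"
    using assms(9) unfolding constraining_pair_def by blast
  obtain phit etat where SPt: "solves_SP lt rt psi phit etat" and elt: "eta_lt \<in> Dspace" and ert: "eta_rt \<in> Dspace"
    and ndlt: "nondecr_from0 eta_lt" and ndrt: "nondecr_from0 eta_rt"
    and eeqt: "\<forall>t\<ge>0. etat t = eta_lt t - eta_rt t"
    and AElt: "AE s in LS_measure eta_lt. 0 \<le> s \<longrightarrow> \<not> (ereal (phit s) > lt s)"
    and AErt: "AE s in LS_measure eta_rt. 0 \<le> s \<longrightarrow> \<not> (ereal (phit s) < rt s)"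
    using assms(10) unfolding constraining_pair_def by blast
  define ext where "ext g = (\<lambda>x::real. if x < 0 then 0 else g x)" for g :: "real \<Rightarrow> real"
  define Dr where "Dr x = ext eta_rt x - ext eta_r x" for x
  define Dl where "Dl x = ext eta_lt x - ext eta_l x" for x
  have phi_le: "\<And>x. 0 \<le> x \<Longrightarrow> l x \<le> ereal (phi x) \<and> ereal (phi x) \<le> r x"
    using SP by (auto simp: solves_SP_def)
  have phit_le: "\<And>x. 0 \<le> x \<Longrightarrow> lt x \<le> ereal (phit x) \<and> ereal (phit x) \<le> rt x"
    using SPt by (auto simp: solves_SP_def)
  have phidiff: "\<And>x. 0 \<le> x \<Longrightarrow> phit x - phi x = Dl x - Dr x"
    using SP SPt eeq eeqt by (auto simp: solves_SP_def Dl_def Dr_def ext_def)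
  have phit_c: "\<And>s. 0 \<le> s \<Longrightarrow> continuous (at_right s) (\<lambda>x. ereal (phit x))"
    using SPt by (intro rc_ereal) (auto simp: solves_SP_def)
  have AEs_r: "AE x in interval_measure (ext eta_rt). 0 \<le> x \<longrightarrow> rt x \<le> ereal (phit x)"
    using AErt unfolding LS_measure_def ext_def by (simp add: not_less)
  have AEs_l: "AE x in interval_measure (ext eta_lt). 0 \<le> x \<longrightarrow> ereal (phit x) \<le> lt x"
    using AElt unfolding LS_measure_def ext_def by (simp add: not_less)
  have m1: "mono (ext eta_rt)" "mono (ext eta_r)" "mono (ext eta_lt)" "mono (ext eta_l)"
    unfolding ext_def using ext_mono ndrt ndr ndlt ndl by auto
  have c1: "\<And>a. continuous (at_right a) (ext eta_rt)" "\<And>a. continuous (at_right a) (ext eta_lt)"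
    unfolding ext_def using ext_rc ert elt by auto
  show ?thesis
  proof (rule ccontr)
    assume nt: "\<not> ?thesis"
    define S where "S = {t. 0 \<le> t \<and> (Dr t > 0 \<or> Dl t > 0)}"
    have neS: "S \<noteq> {}"
    proof -
      from nt obtain t where "t \<ge> 0" "\<not> (eta_r t \<ge> eta_rt t \<and> eta_l t \<ge> eta_lt t)" by auto
      then have "t \<in> S" by (auto simp: S_def Dr_def Dl_def ext_def)
      then show ?thesis by auto
    qed
    have bddS: "bdd_below S" by (rule bdd_belowI[of _ 0]) (auto simp: S_def)
    define \<sigma> where "\<sigma> = Inf S"
    have s0: "0 \<le> \<sigma>" unfolding \<sigma>_def using neS by (intro cInf_greatest) (auto simp: S_def)
    have pos: "\<sigma> \<le> x \<and> 0 \<le> x" if "Dr x > 0 \<or> Dl x > 0" for x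
    proof -
      have "0 \<le> x" using that by (auto simp: Dr_def Dl_def ext_def split: if_splits)
      then have "x \<in> S" using that by (auto simp: S_def)
      then show ?thesis using cInf_lower[OF _ bddS] \<open>0 \<le> x\<close> by (auto simp: \<sigma>_def)
    qed
    have below: "Dr x \<le> 0 \<and> Dl x \<le> 0" if "x < \<sigma>" for x
      using pos[of x] that by force
    have exS: "\<exists>s. \<sigma> \<le> s \<and> s < b \<and> (Dr s > 0 \<or> Dl s > 0)" if "b > \<sigma>" for b
    proof -
      have "Inf S < b" using that by (simp add: \<sigma>_def)
      then obtain s where "s \<in> S" "s < b" using cInf_less_iff[OF neS bddS] by auto
      then show ?thesis using pos[of s] by (auto simp: S_def)
    qed
    have gap: "lt \<sigma> < ereal (phit \<sigma>) \<or> ereal (phit \<sigma>) < rt \<sigma>"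
    proof (rule ccontr)
      assume "\<not> ?thesis"
      then have h: "ereal (phit \<sigma>) \<le> lt \<sigma>" "rt \<sigma> \<le> ereal (phit \<sigma>)" by auto
      have "ereal (phit \<sigma>) \<le> l \<sigma>" using h(1) assms(5) s0 by (metis order_trans)
      moreover have "l \<sigma> + ereal \<delta> \<le> ereal (phit \<sigma>)"
        using dgap assms(6) h(2) s0 by (metis order_trans)
      ultimately show False using dpos by (cases "l \<sigma>") auto
    qed
    then show False
    proof
      assume A: "lt \<sigma> < ereal (phit \<sigma>)"
      obtain b where b: "b > \<sigma>" "\<And>x. \<sigma> \<le> x \<Longrightarrow> x < b \<Longrightarrow> lt x < ereal (phit x)"
        using rc_less[OF rc_D[of lt] phit_c A] assms(2) s0 by blast
      have Dl0: "Dl u \<le> 0" if u1: "\<sigma> \<le> u" "u < b" for u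
      proof (rule ccontr)
        assume "\<not> Dl u \<le> 0"
        then have "ext eta_lt u - ext eta_l u > 0" by (simp add: Dl_def)
        moreover have "ext eta_lt (\<sigma> - 1) - ext eta_l (\<sigma> - 1) \<le> 0" using below[of "\<sigma> - 1"] by (simp add: Dl_def)
        ultimately obtain x where x: "\<sigma> - 1 < x" "x \<le> u" "0 \<le> x \<longrightarrow> ereal (phit x) \<le> lt x"
            "ext eta_lt x - ext eta_l x > 0"
          using core[OF m1(3) m1(4) c1(2) AEs_l, of "\<sigma> - 1" u] u1 by auto
        then have "\<sigma> \<le> x" "0 \<le> x" using pos[of x] by (auto simp: Dl_def)
        then show False using x b(2)[of x] u1 by auto
      qed
      obtain s where s: "\<sigma> \<le> s" "s < b" "Dr s > 0 \<or> Dl s > 0" using exS[OF b(1)] by auto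
      then have "Dr s > 0" using Dl0[of s] by auto
      then have "ext eta_rt s - ext eta_r s > 0" by (simp add: Dr_def)
      moreover have "ext eta_rt (\<sigma> - 1) - ext eta_r (\<sigma> - 1) \<le> 0" using below[of "\<sigma> - 1"] by (simp add: Dr_def)
      ultimately obtain x where x: "\<sigma> - 1 < x" "x \<le> s" "0 \<le> x \<longrightarrow> rt x \<le> ereal (phit x)"
          "ext eta_rt x - ext eta_r x > 0"
        using core[OF m1(1) m1(2) c1(1) AEs_r, of "\<sigma> - 1" s] s by auto
      then have x2: "\<sigma> \<le> x" "0 \<le> x" "Dr x > 0" using pos[of x] by (auto simp: Dr_def)
      have "ereal (phi x) \<le> ereal (phit x)"
        using phi_le[OF x2(2)] assms(6) x2(2) x(3) by (metis order_trans)
      then have "Dl x > 0" using phidiff[OF x2(2)] x2(3) by simp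
      then show False using Dl0[of x] x2 x s by auto
    next
      assume A: "ereal (phit \<sigma>) < rt \<sigma>"
      obtain b where b: "b > \<sigma>" "\<And>x. \<sigma> \<le> x \<Longrightarrow> x < b \<Longrightarrow> ereal (phit x) < rt x"
        using rc_less[OF phit_c rc_D[of rt] A] assms(4) s0 by blast
      have Dr0: "Dr u \<le> 0" if u1: "\<sigma> \<le> u" "u < b" for u
      proof (rule ccontr)
        assume "\<not> Dr u \<le> 0"
        then have "ext eta_rt u - ext eta_r u > 0" by (simp add: Dr_def)
        moreover have "ext eta_rt (\<sigma> - 1) - ext eta_r (\<sigma> - 1) \<le> 0" using below[of "\<sigma> - 1"] by (simp add: Dr_def)
        ultimately obtain x where x: "\<sigma> - 1 < x" "x \<le> u" "0 \<le> x \<longrightarrow> rt x \<le> ereal (phit x)"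
            "ext eta_rt x - ext eta_r x > 0"
          using core[OF m1(1) m1(2) c1(1) AEs_r, of "\<sigma> - 1" u] u1 by auto
        then have "\<sigma> \<le> x" "0 \<le> x" using pos[of x] by (auto simp: Dr_def)
        then show False using x b(2)[of x] u1 by auto
      qed
      obtain s where s: "\<sigma> \<le> s" "s < b" "Dr s > 0 \<or> Dl s > 0" using exS[OF b(1)] by auto
      then have "Dl s > 0" using Dr0[of s] by auto
      then have "ext eta_lt s - ext eta_l s > 0" by (simp add: Dl_def)
      moreover have "ext eta_lt (\<sigma> - 1) - ext eta_l (\<sigma> - 1) \<le> 0" using below[of "\<sigma> - 1"] by (simp add: Dl_def)
      ultimately obtain x where x: "\<sigma> - 1 < x" "x \<le> s" "0 \<le> x \<longrightarrow> ereal (phit x) \<le> lt x"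
          "ext eta_lt x - ext eta_l x > 0"
        using core[OF m1(3) m1(4) c1(2) AEs_l, of "\<sigma> - 1" s] s by auto
      then have x2: "\<sigma> \<le> x" "0 \<le> x" "Dl x > 0" using pos[of x] by (auto simp: Dl_def)
      have "ereal (phit x) \<le> ereal (phi x)"
        using phi_le[OF x2(2)] assms(5) x2(2) x(3) by (metis order_trans)
      then have "Dr x > 0" using phidiff[OF x2(2)] x2(3) by simp
      then show False using Dr0[of x] x2 x s by auto
    qed
  qed
qed

end
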